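(* Let $\mathfrak{M}=\{M^{(\alpha)}:\alpha>0\}$ be a non-quasianalytic weight matrix. Then $\mathfrak{K}=\mathfrak{K}(\mathfrak{M})$ is a weight matrix such that $(K^{(\alpha)}_j/j!)^{1/j}\to\infty$ as $j\to\infty$ and $K^{(\alpha)}_j/M^{(\alpha)}_j$ is bounded in $j$, for all $\alpha>0$.
   Context: A weight sequence is $M=(M_k)_{k\ge0}$ with $M_k=\mu_0\cdots\mu_k$, $1=\mu_0\le\mu_1\le\cdots$, $\mu_k\to\infty$; non-quasianalytic if $\sum_k1/\mu_k<\infty$. A weight matrix is a family $\{M^{(\alpha)}:\alpha>0\}$ of weight sequences with $M^{(\alpha)}\le M^{(\beta)}$ (termwise) for $\alpha\le\beta$; non-quasianalytic if every member is. Associated function: $\omega_M(t)=\sup_k\log(t^kM_0/M_k)$, $\omega_M(0)=0$; $\widetilde\omega_M(t)=\omega_M(t)+\log(1+t^2)$. For a non-quasianalytic pre-weight function $\omega$ (continuous increasing, $\omega(0)=0$, $\log t=o(\omega(t))$, $t\mapsto\omega(e^t)$ convex, $\int_0^\infty\omega(t)/(1+t^2)dt<\infty$) let $\kappa_\omega(t)=\int_1^\infty\omega(ts)s^{-2}ds$, $\varphi_\omega(t)=\omega(e^t)$, $\varphi^*_\omega(x)=\sup_{y\ge0}(xy-\varphi_\omega(y))$. Set $\kappa_\alpha=\kappa_{\widetilde\omega_{M^{(\alpha)}}}$ and $K^{(\alpha)}_j=\exp(\varphi^*_{\kappa_\alpha}(j))$, where $\kappa_\alpha$ is replaced by an equivalent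 (each $O$ of the other at $\infty$) normalized one ($=0$ on $[0,1]$) so that $1=K^{(\alpha)}_0\le K^{(\alpha)}_1$; $\mathfrak{K}(\mathfrak{M})=\{K^{(\alpha)}:\alpha>0\}$. *)

theory Defs
  imports "HOL-Analysis.Analysis" "HOL-Library.Landau_Symbols"
begin

definition wseq_rep :: "(nat \<Rightarrow> real) \<Rightarrow> (nat \<Rightarrow> real) \<Rightarrow> bool" where
  "wseq_rep M \<mu> \<longleftrightarrow> \<mu> 0 = 1 \<and> mono \<mu> \<and> filterlim \<mu> at_top sequentially
     \<and> (\<forall>k. M k = (\<Prod>i\<le>k. \<mu> i))"

definition weight_seq :: "(nat \<Rightarrow> real) \<Rightarrow> bool" where
  "weight_seq M \<longleftrightarrow> (\<exists>\<mu>. wseq_rep M \<mu>)"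

definition nq_weight_seq :: "(nat \<Rightarrow> real) \<Rightarrow> bool" where
  "nq_weight_seq M \<longleftrightarrow> (\<exists>\<mu>. wseq_rep M \<mu> \<and> summable (\<lambda>k. 1 / \<mu> k))"

definition weight_matrix :: "(real \<Rightarrow> nat \<Rightarrow> real) \<Rightarrow> bool" where
  "weight_matrix Mf \<longleftrightarrow> (\<forall>\<alpha>>0. weight_seq (Mf \<alpha>))
     \<and> (\<forall>\<alpha> \<beta>. 0 < \<alpha> \<longrightarrow> \<alpha> \<le> \<beta> \<longrightarrow> (\<forall>k. Mf \<alpha> k \<le> Mf \<beta> k))"

definition nq_weight_matrix :: "(real \<Rightarrow> nat \<Rightarrow> real) \<Rightarrow> bool" where
  "nq_weight_matrix Mf \<longleftrightarrow> weight_matrix Mf \<and> (\<forall>\<alpha>>0. nq_weight_seq (Mf \<alpha>))"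

text \<open>Associated function (used for t \<ge> 0).\<close>
definition assoc_fun :: "(nat \<Rightarrow> real) \<Rightarrow> real \<Rightarrow> real" where
  "assoc_fun M t = (if t = 0 then 0 else (SUP k. ln (t ^ k * M 0 / M k)))"

definition assoc_tilde :: "(nat \<Rightarrow> real) \<Rightarrow> real \<Rightarrow> real" where
  "assoc_tilde M t = assoc_fun M t + ln (1 + t\<^sup>2)"

definition pre_weight_fun :: "(real \<Rightarrow> real) \<Rightarrow> bool" where
  "pre_weight_fun \<omega> \<longleftrightarrow> continuous_on {0..} \<omega> \<and> mono_on {0..} \<omega> \<and> \<omega> 0 = 0
     \<and> (\<lambda>t. ln t) \<in> o[at_top](\<omega>) \<and> convex_on UNIV (\<lambda>t. \<omega> (exp t))"

definition kappa :: "(real \<Rightarrow> real) \<Rightarrow> real \<Rightarrow> real" where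
  "kappa \<omega> t = (LINT s:{1..}|lborel. \<omega> (t * s) / s\<^sup>2)"

definition phi_fun :: "(real \<Rightarrow> real) \<Rightarrow> real \<Rightarrow> real" where
  "phi_fun \<omega> y = \<omega> (exp y)"

definition phi_star :: "(real \<Rightarrow> real) \<Rightarrow> real \<Rightarrow> real" where
  "phi_star \<omega> x = (SUP y\<in>{0..}. x * y - phi_fun \<omega> y)"

definition Kseq :: "(real \<Rightarrow> real) \<Rightarrow> nat \<Rightarrow> real" where
  "Kseq \<kappa> j = exp (phi_star \<kappa> (real j))"

definition normalized_equiv :: "(real \<Rightarrow> real) \<Rightarrow> (real \<Rightarrow> real) \<Rightarrow> bool" where
  "normalized_equiv \<kappa> \<kappa>' \<longleftrightarrow> pre_weight_fun \<kappa>' \<and> (\<forall>t\<in>{0..1}. \<kappa>' t = 0)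
     \<and> \<kappa>' \<in> O[at_top](\<kappa>) \<and> \<kappa> \<in> O[at_top](\<kappa>')"

end

theory Submission
  imports Defs "HOL-Real_Asymp.Real_Asymp"
begin


lemma wr_mu_ge1: assumes "wseq_rep M \<mu>" shows "\<mu> i \<ge> 1"
proof -
  have "mono \<mu>" "\<mu> 0 = 1" using assms unfolding wseq_rep_def by auto
  then show ?thesis by (metis monoD zero_le)
qed

lemma wr_M0: "wseq_rep M \<mu> \<Longrightarrow> M 0 = 1"
  unfolding wseq_rep_def by auto

lemma wr_M_Suc: "wseq_rep M \<mu> \<Longrightarrow> M (Suc k) = M k * \<mu> (Suc k)"
  unfolding wseq_rep_def by (simp add: atMost_Suc mult.commute)

lemma wr_M_ge1: assumes "wseq_rep M \<mu>" shows "M k \<ge> 1"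
proof -
  have "M k = (\<Prod>i\<le>k. \<mu> i)" using assms unfolding wseq_rep_def by auto
  also have "\<dots> \<ge> 1" by (rule prod_ge_1) (use wr_mu_ge1[OF assms] in auto)
  finally show ?thesis .
qed

lemma wr_ln: assumes "wseq_rep M \<mu>" "t > 0"
  shows "ln (t ^ k * M 0 / M k) = (\<Sum>i\<in>{1..k}. ln (t / \<mu> i))"
proof (induction k)
  case 0 then show ?case using wr_M0[OF assms(1)] by simp
next
  case (Suc k)
  have mk: "M k > 0" using wr_M_ge1[OF assms(1)] less_le_trans zero_less_one by blast
  have mu: "\<mu> (Suc k) > 0" using wr_mu_ge1[OF assms(1)] less_le_trans zero_less_one by blast
  have "t ^ Suc k * M 0 / M (Suc k) = (t ^ k * M 0 / M k) * (t / \<mu> (Suc k))"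
    using wr_M_Suc[OF assms(1)] by (simp add: field_simps)
  moreover have "ln ((t ^ k * M 0 / M k) * (t / \<mu> (Suc k))) = ln (t ^ k * M 0 / M k) + ln (t / \<mu> (Suc k))"
    using mk mu assms(2) wr_M0[OF assms(1)] by (intro ln_mult_pos) auto
  ultimately have "ln (t ^ Suc k * M 0 / M (Suc k)) = ln (t ^ k * M 0 / M k) + ln (t / \<mu> (Suc k))"
    by simp
  then show ?case using Suc by simp
qed

lemma wr_ln2: assumes "wseq_rep M \<mu>" "t > 0"
  shows "ln (t ^ k * M 0 / M k) = k * ln t - ln (M k)"
proof -
  have mk: "M k > 0" using wr_M_ge1[OF assms(1)] less_le_trans zero_less_one by blast
  show ?thesis using wr_M0[OF assms(1)] mk assms(2) by (simp add: ln_div ln_realpow)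
qed

definition rr :: "(nat \<Rightarrow> real) \<Rightarrow> real \<Rightarrow> nat \<Rightarrow> real" where
  "rr \<mu> v i = max 0 (ln (v / \<mu> i))"

lemma rr_nonneg: "rr \<mu> v i \<ge> 0" unfolding rr_def by simp

lemma rr_finite: assumes "wseq_rep M \<mu>" "v > 0"
  obtains N where "\<And>i. i \<ge> N \<Longrightarrow> rr \<mu> v i = 0"
proof -
  have "filterlim \<mu> at_top sequentially" using assms unfolding wseq_rep_def by auto
  then have "eventually (\<lambda>i. v \<le> \<mu> i) sequentially" by (simp add: filterlim_at_top)
  then obtain N where N: "\<And>i. i \<ge> N \<Longrightarrow> v \<le> \<mu> i" by (auto simp: eventually_sequentially)
  have "rr \<mu> v i = 0" if "i \<ge> N" for i
  proof -
    have "\<mu> i > 0" using wr_mu_ge1[OF assms(1)] less_le_trans zero_less_one by blast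
    then have "v / \<mu> i \<le> 1" using N[OF that] by simp
    then have "ln (v / \<mu> i) \<le> 0" using assms(2) \<open>\<mu> i > 0\<close> by simp
    then show ?thesis unfolding rr_def by simp
  qed
  then show ?thesis using that by blast
qed

lemma rr_summable: assumes "wseq_rep M \<mu>" "v > 0" shows "summable (rr \<mu> v)"
proof -
  obtain N where N: "\<And>i. i \<ge> N \<Longrightarrow> rr \<mu> v i = 0" using rr_finite[OF assms] by blast
  have "rr \<mu> v sums (\<Sum>i\<in>{..<N}. rr \<mu> v i)" by (rule sums_finite) (use N in auto)
  then show ?thesis by (rule sums_summable)
qed

lemma omega_term_le: assumes "wseq_rep M \<mu>" "v > 0"
  shows "ln (v ^ k * M 0 / M k) \<le> suminf (rr \<mu> v)"
proof -
  have "ln (v ^ k * M 0 / M k) = (\<Sum>i\<in>{1..k}. ln (v / \<mu> i))" by (rule wr_ln[OF assms])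
  also have "\<dots> \<le> (\<Sum>i\<in>{1..k}. rr \<mu> v i)" by (rule sum_mono) (simp add: rr_def)
  also have "\<dots> \<le> suminf (rr \<mu> v)"
    by (rule sum_le_suminf) (use rr_summable[OF assms] rr_nonneg in auto)
  finally show ?thesis .
qed

lemma omega_bdd: assumes "wseq_rep M \<mu>" "v > 0"
  shows "bdd_above (range (\<lambda>k. ln (v ^ k * M 0 / M k)))"
  using omega_term_le[OF assms] by (auto intro!: bdd_aboveI)

lemma omega_ge: assumes "wseq_rep M \<mu>" "v > 0"
  shows "ln (v ^ k * M 0 / M k) \<le> assoc_fun M v"
  unfolding assoc_fun_def using assms(2) by (auto intro!: cSUP_upper omega_bdd[OF assms])

lemma omega_ge2: assumes "wseq_rep M \<mu>" "v > 0"
  shows "k * ln v - ln (M k) \<le> assoc_fun M v"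
  using omega_ge[OF assms, of k] wr_ln2[OF assms, of k] by simp

lemma omega_le: assumes "wseq_rep M \<mu>" "v > 0"
  shows "assoc_fun M v \<le> suminf (rr \<mu> v)"
  unfolding assoc_fun_def using assms(2) by (auto intro!: cSUP_least omega_term_le[OF assms])

lemma omega_nonneg: assumes "wseq_rep M \<mu>" "v \<ge> 0"
  shows "0 \<le> assoc_fun M v"
proof (cases "v = 0")
  case True then show ?thesis by (simp add: assoc_fun_def)
next
  case False
  then have "v > 0" using assms by simp
  from omega_ge[OF assms(1) this, of 0] show ?thesis using wr_M0[OF assms(1)] by simp
qed

lemma omega_mono: assumes "wseq_rep M \<mu>" "0 \<le> s" "s \<le> t"
  shows "assoc_fun M s \<le> assoc_fun M t"
proof (cases "s = 0")
  case True then show ?thesis using omega_nonneg[OF assms(1), of t] assms by (simp add: assoc_fun_def)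
next
  case False
  then have s: "s > 0" using assms by simp
  then have t: "t > 0" using assms by simp
  have "(SUP k. ln (s ^ k * M 0 / M k)) \<le> (SUP k. ln (t ^ k * M 0 / M k))"
  proof (rule cSUP_mono)
    show "bdd_above (range (\<lambda>k. ln (t ^ k * M 0 / M k)))" by (rule omega_bdd[OF assms(1) t])
    fix k
    have "ln (s ^ k * M 0 / M k) \<le> ln (t ^ k * M 0 / M k)"
      using wr_ln2[OF assms(1) s, of k] wr_ln2[OF assms(1) t, of k] s assms(3)
      by (simp add: mult_left_mono)
    then show "\<exists>m\<in>UNIV. ln (s ^ k * M 0 / M k) \<le> ln (t ^ m * M 0 / M m)" by blast
  qed auto
  then show ?thesis using s t by (simp add: assoc_fun_def)
qed

lemma omega_exp: assumes "wseq_rep M \<mu>"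
  shows "assoc_fun M (exp x) = (SUP k. real k * x - ln (M k))"
  using wr_ln2[OF assms exp_gt_zero] by (simp add: assoc_fun_def)

lemma omega_convex: assumes "wseq_rep M \<mu>"
  shows "convex_on UNIV (\<lambda>x. assoc_fun M (exp x))"
proof (rule convex_onI)
  fix t x y :: real assume t: "0 < t" "t < 1"
  have b: "bdd_above (range (\<lambda>k. real k * z - ln (M k)))" for z
    using omega_bdd[OF assms exp_gt_zero, of z] wr_ln2[OF assms exp_gt_zero, of z] by simp
  show "assoc_fun M (exp ((1 - t) *\<^sub>R x + t *\<^sub>R y))
        \<le> (1 - t) * assoc_fun M (exp x) + t * assoc_fun M (exp y)"
    unfolding omega_exp[OF assms]
  proof (rule cSUP_least)
    fix k
    have "real k * ((1 - t) *\<^sub>R x + t *\<^sub>R y) - ln (M k)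
        = (1 - t) * (real k * x - ln (M k)) + t * (real k * y - ln (M k))"
      by (simp add: algebra_simps)
    also have "\<dots> \<le> (1 - t) * (SUP k. real k * x - ln (M k)) + t * (SUP k. real k * y - ln (M k))"
      using t by (intro add_mono mult_left_mono cSUP_upper b) auto
    finally show "real k * ((1 - t) *\<^sub>R x + t *\<^sub>R y) - ln (M k)
        \<le> (1 - t) * (SUP k. real k * x - ln (M k)) + t * (SUP k. real k * y - ln (M k))" .
  qed auto
qed auto


lemma lnsq_deriv: "((\<lambda>x. ln (1 + (exp x)\<^sup>2)) has_real_derivative 2 * (exp x)\<^sup>2 / (1 + (exp x)\<^sup>2)) (at x)"
proof -
  have p: "1 + exp x * exp x > 0" by (simp add: add_pos_nonneg)
  have "((\<lambda>x. ln (1 + exp x * exp x)) has_real_derivative (1 / (1 + exp x * exp x)) * (0 + (exp x * exp x + exp x * exp x))) (at x)"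
    by (intro derivative_intros) (use p in auto)
  then show ?thesis by (simp add: power2_eq_square)
qed

lemma aux_frac: "(a::real) \<ge> 0 \<Longrightarrow> 2 * a / (1 + a) = 2 - 2 / (1 + a)"
  by (simp add: field_simps)

lemma lnsq_convex: "convex_on UNIV (\<lambda>x::real. ln (1 + (exp x)\<^sup>2))"
proof (rule convex_on_realI[where f' = "\<lambda>x. 2 * (exp x)\<^sup>2 / (1 + (exp x)\<^sup>2)"])
  fix x :: real
  show "((\<lambda>x. ln (1 + (exp x)\<^sup>2)) has_real_derivative 2 * (exp x)\<^sup>2 / (1 + (exp x)\<^sup>2)) (at x)"
    by (rule lnsq_deriv)
next
  fix x y :: real assume "x \<le> y"
  then have le: "(exp x)\<^sup>2 \<le> (exp y)\<^sup>2" by (simp add: power_mono)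
  have "2 * (exp x)\<^sup>2 / (1 + (exp x)\<^sup>2) = 2 - 2 / (1 + (exp x)\<^sup>2)" by (rule aux_frac) simp
  also have "\<dots> \<le> 2 - 2 / (1 + (exp y)\<^sup>2)" using le by (intro diff_left_mono divide_left_mono) (auto simp: add_pos_nonneg)
  also have "\<dots> = 2 * (exp y)\<^sup>2 / (1 + (exp y)\<^sup>2)" by (rule aux_frac[symmetric]) simp
  finally show "2 * (exp x)\<^sup>2 / (1 + (exp x)\<^sup>2) \<le> 2 * (exp y)\<^sup>2 / (1 + (exp y)\<^sup>2)" .
qed auto

lemma W_nonneg: assumes "wseq_rep M \<mu>" "v \<ge> 0" shows "0 \<le> assoc_tilde M v"
  using omega_nonneg[OF assms] by (simp add: assoc_tilde_def)

lemma W_zero: "assoc_tilde M 0 = 0"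
  by (simp add: assoc_tilde_def assoc_fun_def)

lemma W_mono: assumes "wseq_rep M \<mu>" "0 \<le> s" "s \<le> t"
  shows "assoc_tilde M s \<le> assoc_tilde M t"
proof -
  have "s\<^sup>2 \<le> t\<^sup>2" using assms by (simp add: power_mono)
  then have "ln (1 + s\<^sup>2) \<le> ln (1 + t\<^sup>2)" by (simp add: add_pos_nonneg)
  then show ?thesis using omega_mono[OF assms] by (simp add: assoc_tilde_def)
qed

lemma W_convex: assumes "wseq_rep M \<mu>"
  shows "convex_on UNIV (\<lambda>x. assoc_tilde M (exp x))"
  unfolding assoc_tilde_def by (rule convex_on_add[OF omega_convex[OF assms] lnsq_convex])

lemma W_ge: assumes "wseq_rep M \<mu>" "v > 0"
  shows "k * ln v - ln (M k) \<le> assoc_tilde M v"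
proof -
  have "0 \<le> ln (1 + v\<^sup>2)" by (rule ln_ge_zero) simp
  then show ?thesis using omega_ge2[OF assms, of k] unfolding assoc_tilde_def by linarith
qed

lemma Wp_borel: assumes "wseq_rep M \<mu>"
  shows "(\<lambda>v. assoc_tilde M (max 0 v)) \<in> borel_measurable borel"
  by (rule borel_measurable_mono) (auto simp: mono_def intro!: W_mono[OF assms])

lemma lnsq_bound: assumes "(v::real) \<ge> 1" shows "ln (1 + v\<^sup>2) \<le> 1 + 2 * ln v"
proof -
  have "exp 1 \<ge> (2::real)" using exp_ge_add_one_self[of 1] by simp
  have "1 + v\<^sup>2 \<le> 2 * v\<^sup>2" using assms by (simp add: one_le_power)
  also have "\<dots> \<le> exp 1 * v\<^sup>2" using \<open>exp 1 \<ge> 2\<close> by (simp add: mult_right_mono)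
  finally have "ln (1 + v\<^sup>2) \<le> ln (exp 1 * v\<^sup>2)" using assms by (subst ln_le_cancel_iff) (auto simp: add_pos_nonneg)
  also have "\<dots> = 1 + 2 * ln v" using assms by (simp add: ln_mult_pos ln_realpow)
  finally show ?thesis .
qed

lemma W_le: assumes "wseq_rep M \<mu>" "v \<ge> 1"
  shows "assoc_tilde M v \<le> 1 + 3 * suminf (rr \<mu> v)"
proof -
  have v: "v > 0" using assms by simp
  have "ln v = rr \<mu> v 0" using assms wr_mu_ge1[OF assms(1)] unfolding rr_def wseq_rep_def by auto
  also have "\<dots> = (\<Sum>i\<in>{0}. rr \<mu> v i)" by simp
  also have "\<dots> \<le> suminf (rr \<mu> v)"
    by (rule sum_le_suminf) (use rr_summable[OF assms(1) v] rr_nonneg in auto)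
  finally have "ln v \<le> suminf (rr \<mu> v)" .
  then show ?thesis using omega_le[OF assms(1) v] lnsq_bound[OF assms(2)]
    by (simp add: assoc_tilde_def)
qed

lemma per_term: assumes "(m::real) \<ge> 1"
  shows "(\<integral>\<^sup>+v. ennreal (indicator {1..} v * max 0 (ln (v / m)) / v\<^sup>2) \<partial>lborel) = ennreal (1 / m)"
proof -
  have "(\<integral>\<^sup>+v. ennreal (indicator {1..} v * max 0 (ln (v / m)) / v\<^sup>2) \<partial>lborel)
      = (\<integral>\<^sup>+v. ennreal (ln (v / m) / v\<^sup>2) * indicator {m..} v \<partial>lborel)"
  proof (rule nn_integral_cong)
    fix v :: real
    show "ennreal (indicator {1..} v * max 0 (ln (v / m)) / v\<^sup>2) = ennreal (ln (v / m) / v\<^sup>2) * indicator {m..} v"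
    proof (cases "v \<ge> m")
      case True
      then have "ln (v / m) \<ge> 0" using assms by simp
      then show ?thesis using True assms by (simp add: indicator_def)
    next
      case False
      then have "v / m < 1" "v > 0 \<Longrightarrow> ln (v / m) < 0" using assms by (auto simp: divide_simps)
      then show ?thesis using False by (auto simp: indicator_def max_def)
    qed
  qed
  also have "\<dots> = ennreal (0 - (- (ln m - ln m + 1) / m))"
  proof (rule nn_integral_FTC_atLeast[where F = "\<lambda>v. - (ln v - ln m + 1) / v" and T = 0])
    show "(\<lambda>v. ln (v / m) / v\<^sup>2) \<in> borel_measurable borel" by measurable
    fix x assume x0: "m \<le> x"
    then have x: "x > 0" using assms by simp
    have "((\<lambda>v. - (ln v - ln m + 1) / v) has_real_derivative
       ((- (inverse x - 0 + 0)) * x - (- (ln x - ln m + 1)) * 1) / (x * x)) (at x)"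
      by (intro derivative_intros DERIV_ln) (use x assms in auto)
    moreover have "((- (inverse x - 0 + 0)) * x - (- (ln x - ln m + 1)) * 1) / (x * x) = ln (x / m) / x\<^sup>2"
      using x assms by (simp add: field_simps power2_eq_square ln_div)
    ultimately show "((\<lambda>v. - (ln v - ln m + 1) / v) has_real_derivative ln (x / m) / x\<^sup>2) (at x)" by simp
    show "0 \<le> ln (x / m) / x\<^sup>2" using x0 assms by simp
  next
    show "((\<lambda>v. - (ln v - ln m + 1) / v) \<longlongrightarrow> 0) at_top" by real_asymp
  qed
  also have "\<dots> = ennreal (1 / m)" using assms by simp
  finally show ?thesis .
qed

lemma one_over_sq: "(\<integral>\<^sup>+v. ennreal (indicator {1..} v / v\<^sup>2) \<partial>lborel) = 1"
proof -
  have "(\<integral>\<^sup>+v. ennreal (indicator {1..} v / v\<^sup>2) \<partial>lborel)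
      = (\<integral>\<^sup>+v. ennreal (1 / v\<^sup>2) * indicator {1..} v \<partial>lborel)"
    by (rule nn_integral_cong) (simp add: indicator_def)
  also have "\<dots> = ennreal (0 - (- 1 / 1))"
  proof (rule nn_integral_FTC_atLeast[where F = "\<lambda>v. - 1 / v" and T = 0])
    show "(\<lambda>v::real. 1 / v\<^sup>2) \<in> borel_measurable borel" by measurable
    fix x :: real assume x: "1 \<le> x"
    then have "x > 0" by simp
    have "((\<lambda>v. - 1 / v) has_real_derivative (0 * x - (-1) * 1) / (x * x)) (at x)"
      by (intro derivative_intros) (use \<open>x > 0\<close> in auto)
    then show "((\<lambda>v. - 1 / v) has_real_derivative 1 / x\<^sup>2) (at x)" by (simp add: power2_eq_square)
    show "0 \<le> 1 / x\<^sup>2" by simp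
  next
    show "((\<lambda>v::real. - 1 / v) \<longlongrightarrow> 0) at_top" by real_asymp
  qed
  finally show ?thesis by simp
qed



lemma f1_meas: assumes "wseq_rep M \<mu>" "c \<ge> 0"
  shows "(\<lambda>v. indicator {1..} v * (assoc_tilde M (c * v) / v\<^sup>2)) \<in> borel_measurable lborel"
proof -
  have [measurable]: "(\<lambda>v. assoc_tilde M (max 0 v)) \<in> borel_measurable borel" by (rule Wp_borel[OF assms(1)])
  have "(\<lambda>v. indicator {1..} v * (assoc_tilde M (max 0 (c * v)) / v\<^sup>2)) \<in> borel_measurable lborel"
    by measurable
  moreover have "(\<lambda>v. indicator {1..} v * (assoc_tilde M (max 0 (c * v)) / v\<^sup>2))
     = (\<lambda>v. indicator {1..} v * (assoc_tilde M (c * v) / v\<^sup>2))"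
    using assms(2) by (auto simp: indicator_def fun_eq_iff max_def)
  ultimately show ?thesis by (simp only:)
qed

lemma f1_integrable: assumes "wseq_rep M \<mu>" "summable (\<lambda>k. 1 / \<mu> k)"
  shows "integrable lborel (\<lambda>v. indicator {1..} v * (assoc_tilde M v / v\<^sup>2))"
proof (rule integrableI_nonneg)
  show "(\<lambda>v. indicator {1..} v * (assoc_tilde M v / v\<^sup>2)) \<in> borel_measurable lborel"
    using f1_meas[OF assms(1), of 1] by simp
  show "AE v in lborel. 0 \<le> indicator {1..} v * (assoc_tilde M v / v\<^sup>2)"
    using W_nonneg[OF assms(1)] by (auto simp: indicator_def)
  define q where "q = (\<lambda>i v. indicator {1..} v * max 0 (ln (v / \<mu> i)) / v\<^sup>2)"
  have qm[measurable]: "(\<lambda>v. ennreal (q i v)) \<in> borel_measurable lborel" for i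
    unfolding q_def by measurable
  have pt: "ennreal (indicator {1..} v * (assoc_tilde M v / v\<^sup>2))
      \<le> ennreal (indicator {1..} v / v\<^sup>2) + 3 * (\<Sum>i. ennreal (q i v))" for v
  proof (cases "v \<ge> 1")
    case False then show ?thesis by (simp add: indicator_def)
  next
    case True
    then have v: "v > 0" by simp
    have sq: "summable (\<lambda>i. q i v)"
      using summable_divide[OF rr_summable[OF assms(1) v], of "v\<^sup>2"] True
      by (simp add: q_def rr_def)
    have sq_eq: "(\<Sum>i. q i v) = suminf (rr \<mu> v) / v\<^sup>2"
      using suminf_divide[OF rr_summable[OF assms(1) v], of "v\<^sup>2"] True
      by (simp add: q_def rr_def)
    have "indicator {1..} v * (assoc_tilde M v / v\<^sup>2) \<le> (1 + 3 * suminf (rr \<mu> v)) / v\<^sup>2"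
      using W_le[OF assms(1) True] True by (simp add: divide_right_mono)
    also have "\<dots> = indicator {1..} v / v\<^sup>2 + 3 * (\<Sum>i. q i v)"
      using True sq_eq by (simp add: add_divide_distrib)
    finally have "ennreal (indicator {1..} v * (assoc_tilde M v / v\<^sup>2))
        \<le> ennreal (indicator {1..} v / v\<^sup>2 + 3 * (\<Sum>i. q i v))" by (rule ennreal_leI)
    also have "\<dots> = ennreal (indicator {1..} v / v\<^sup>2) + 3 * ennreal (\<Sum>i. q i v)"
      using sq by (simp add: ennreal_plus ennreal_mult q_def suminf_nonneg)
    also have "ennreal (\<Sum>i. q i v) = (\<Sum>i. ennreal (q i v))"
    proof -
      have nn: "\<And>i. 0 \<le> q i v" by (simp add: q_def)
      show ?thesis using suminf_ennreal2[OF nn sq] by simp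
    qed
    finally show ?thesis .
  qed
  have "(\<integral>\<^sup>+v. ennreal (indicator {1..} v * (assoc_tilde M v / v\<^sup>2)) \<partial>lborel)
     \<le> (\<integral>\<^sup>+v. ennreal (indicator {1..} v / v\<^sup>2) + 3 * (\<Sum>i. ennreal (q i v)) \<partial>lborel)"
    by (rule nn_integral_mono) (rule pt)
  also have "\<dots> = (\<integral>\<^sup>+v. ennreal (indicator {1..} v / v\<^sup>2) \<partial>lborel) + 3 * (\<integral>\<^sup>+v. (\<Sum>i. ennreal (q i v)) \<partial>lborel)"
    by (subst nn_integral_add) (auto simp: nn_integral_cmult)
  also have "(\<integral>\<^sup>+v. (\<Sum>i. ennreal (q i v)) \<partial>lborel) = (\<Sum>i. ennreal (1 / \<mu> i))"
    by (subst nn_integral_suminf) (auto simp: q_def per_term[OF wr_mu_ge1[OF assms(1)]])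
  also have "\<dots> = ennreal (\<Sum>i. 1 / \<mu> i)"
    using assms(2) wr_mu_ge1[OF assms(1)] by (intro suminf_ennreal2) (auto intro: order.trans[of 0 1])
  finally have le: "(\<integral>\<^sup>+v. ennreal (indicator {1..} v * (assoc_tilde M v / v\<^sup>2)) \<partial>lborel) \<le> 1 + 3 * ennreal (\<Sum>i. 1 / \<mu> i)"
    by (simp add: one_over_sq)
  have "1 + 3 * ennreal (\<Sum>i. 1 / \<mu> i) < \<infinity>"
    by (simp add: less_top[symmetric] ennreal_mult_eq_top_iff)
  with le show "(\<integral>\<^sup>+v. ennreal (indicator {1..} v * (assoc_tilde M v / v\<^sup>2)) \<partial>lborel) < \<infinity>"
    by (rule le_less_trans)
qed



lemma kappa_alt: "kappa W t = integral\<^sup>L lborel (\<lambda>s. indicator {1..} s * (W (t * s) / s\<^sup>2))"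
  unfolding kappa_def set_lebesgue_integral_def by simp

lemma kappa_integrable: assumes "wseq_rep M \<mu>" "summable (\<lambda>k. 1 / \<mu> k)" "t > 0"
  shows "integrable lborel (\<lambda>s. indicator {1..} s * (assoc_tilde M (t * s) / s\<^sup>2))"
proof (cases "t \<ge> 1")
  case True
  define g where "g = (\<lambda>v. indicator {t..} v * (indicator {1..} v * (assoc_tilde M v / v\<^sup>2)))"
  have "integrable lborel g"
    using integrable_mult_indicator[OF _ f1_integrable[OF assms(1,2)], of "{t..}"] by (simp add: g_def)
  then have "integrable lborel (\<lambda>x. g (0 + t * x))"
    by (rule lborel_integrable_real_affine) (use assms in simp)
  then have "integrable lborel (\<lambda>x. t\<^sup>2 * g (0 + t * x))" by (rule integrable_mult_right)
  moreover have "(\<lambda>x. t\<^sup>2 * g (0 + t * x)) = (\<lambda>s. indicator {1..} s * (assoc_tilde M (t * s) / s\<^sup>2))"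
  proof
    fix x :: real
    show "t\<^sup>2 * g (0 + t * x) = indicator {1..} x * (assoc_tilde M (t * x) / x\<^sup>2)"
    proof (cases "x \<ge> 1")
      case True
      then have "t * x \<ge> t" "t * x \<ge> 1" using \<open>t \<ge> 1\<close> by (auto intro: order.trans[of 1 t] simp: mult_le_cancel_left1)
      then show ?thesis using True assms(3) by (simp add: g_def power_mult_distrib)
    next
      case False
      then have "t * x < t" using assms(3) by simp
      then show ?thesis using False by (simp add: g_def)
    qed
  qed
  ultimately show ?thesis by (simp only:)
next
  case False
  show ?thesis
  proof (rule Bochner_Integration.integrable_bound[OF f1_integrable[OF assms(1,2)]])
    show "(\<lambda>s. indicator {1..} s * (assoc_tilde M (t * s) / s\<^sup>2)) \<in> borel_measurable lborel"
      by (rule f1_meas) (use assms in auto)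
    show "AE x in lborel. norm (indicator {1..} x * (assoc_tilde M (t * x) / x\<^sup>2))
        \<le> norm (indicator {1..} x * (assoc_tilde M x / x\<^sup>2))"
    proof (rule AE_I2)
      fix x :: real
      show "norm (indicator {1..} x * (assoc_tilde M (t * x) / x\<^sup>2))
        \<le> norm (indicator {1..} x * (assoc_tilde M x / x\<^sup>2))"
      proof (cases "x \<ge> 1")
        case True
        have a: "0 \<le> assoc_tilde M (t * x)" using True assms(3) by (intro W_nonneg[OF assms(1)]) simp
        have b: "assoc_tilde M (t * x) \<le> assoc_tilde M x"
          using True assms(3) False by (intro W_mono[OF assms(1)]) (auto simp: mult_le_cancel_right1)
        show ?thesis using a b True by (simp add: divide_right_mono)
      qed simp
    qed
  qed
qed

lemma kappa_eq: assumes "wseq_rep M \<mu>" "summable (\<lambda>k. 1 / \<mu> k)" "t \<ge> 1"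
  shows "kappa (assoc_tilde M) t = t * integral\<^sup>L lborel (\<lambda>v. indicator {t..} v * (indicator {1..} v * (assoc_tilde M v / v\<^sup>2)))"
proof -
  define g where "g = (\<lambda>v. indicator {t..} v * (indicator {1..} v * (assoc_tilde M v / v\<^sup>2)))"
  have t: "t > 0" "t \<noteq> 0" using assms by auto
  have "integral\<^sup>L lborel g = \<bar>t\<bar> *\<^sub>R integral\<^sup>L lborel (\<lambda>x. g (0 + t * x))"
    by (rule lborel_integral_real_affine) (use t in simp)
  also have "(\<lambda>x. g (0 + t * x)) = (\<lambda>s. (1 / t\<^sup>2) * (indicator {1..} s * (assoc_tilde M (t * s) / s\<^sup>2)))"
  proof
    fix x :: real
    show "g (0 + t * x) = (1 / t\<^sup>2) * (indicator {1..} x * (assoc_tilde M (t * x) / x\<^sup>2))"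
    proof (cases "x \<ge> 1")
      case True
      then have "t * x \<ge> t" "t * x \<ge> 1" using \<open>t \<ge> 1\<close> by (auto intro: order.trans[of 1 t] simp: mult_le_cancel_left1)
      then show ?thesis using True t by (simp add: g_def power_mult_distrib)
    next
      case False
      then have "t * x < t" using t by simp
      then show ?thesis using False by (simp add: g_def)
    qed
  qed
  also have "integral\<^sup>L lborel (\<lambda>s. (1 / t\<^sup>2) * (indicator {1..} s * (assoc_tilde M (t * s) / s\<^sup>2)))
      = (1 / t\<^sup>2) * kappa (assoc_tilde M) t"
    unfolding kappa_alt by (intro Bochner_Integration.integral_mult_right kappa_integrable[OF assms(1,2) t(1)])
  finally have "integral\<^sup>L lborel g = t * ((1 / t\<^sup>2) * kappa (assoc_tilde M) t)" using t by simp
  then show ?thesis using t by (simp add: g_def power2_eq_square field_simps)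
qed

lemma one_over_sq_int: "integrable lborel (\<lambda>s::real. indicator {1..} s / s\<^sup>2)"
  and one_over_sq_val: "integral\<^sup>L lborel (\<lambda>s::real. indicator {1..} s / s\<^sup>2) = 1"
proof -
  have m: "(\<lambda>s::real. indicator {1..} s / s\<^sup>2) \<in> borel_measurable lborel" by measurable
  show "integrable lborel (\<lambda>s::real. indicator {1..} s / s\<^sup>2)"
    by (rule integrableI_nonneg[OF m]) (auto simp: one_over_sq)
  show "integral\<^sup>L lborel (\<lambda>s::real. indicator {1..} s / s\<^sup>2) = 1"
    by (subst integral_eq_nn_integral[OF m]) (auto simp: one_over_sq)
qed

lemma kappa_ge: assumes "wseq_rep M \<mu>" "summable (\<lambda>k. 1 / \<mu> k)" "t > 0"
  shows "assoc_tilde M t \<le> kappa (assoc_tilde M) t"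
proof -
  have "integral\<^sup>L lborel (\<lambda>s. assoc_tilde M t * (indicator {1..} s / s\<^sup>2)) = assoc_tilde M t * integral\<^sup>L lborel (\<lambda>s::real. indicator {1..} s / s\<^sup>2)"
    by (intro Bochner_Integration.integral_mult_right one_over_sq_int)
  then have "assoc_tilde M t = integral\<^sup>L lborel (\<lambda>s. assoc_tilde M t * (indicator {1..} s / s\<^sup>2))"
    by (simp add: one_over_sq_val)
  also have "\<dots> \<le> kappa (assoc_tilde M) t"
    unfolding kappa_alt
  proof (rule integral_mono)
    show "integrable lborel (\<lambda>s. assoc_tilde M t * (indicator {1..} s / s\<^sup>2))"
      by (rule integrable_mult_right) (rule one_over_sq_int)
    show "integrable lborel (\<lambda>s. indicator {1..} s * (assoc_tilde M (t * s) / s\<^sup>2))"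
      by (rule kappa_integrable[OF assms])
    fix s :: real
    show "assoc_tilde M t * (indicator {1..} s / s\<^sup>2) \<le> indicator {1..} s * (assoc_tilde M (t * s) / s\<^sup>2)"
    proof (cases "s \<ge> 1")
      case True
      have "assoc_tilde M t \<le> assoc_tilde M (t * s)"
        using True assms(3) by (intro W_mono[OF assms(1)]) (auto simp: mult_le_cancel_left1)
      then show ?thesis using True by (simp add: divide_right_mono)
    qed simp
  qed
  finally show ?thesis .
qed

lemma kappa_mono: assumes "wseq_rep M \<mu>" "summable (\<lambda>k. 1 / \<mu> k)" "0 < s" "s \<le> t"
  shows "kappa (assoc_tilde M) s \<le> kappa (assoc_tilde M) t"
  unfolding kappa_alt
proof (rule integral_mono)
  show "integrable lborel (\<lambda>x. indicator {1..} x * (assoc_tilde M (s * x) / x\<^sup>2))"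
    by (rule kappa_integrable[OF assms(1,2,3)])
  show "integrable lborel (\<lambda>x. indicator {1..} x * (assoc_tilde M (t * x) / x\<^sup>2))"
    by (rule kappa_integrable[OF assms(1,2)]) (use assms in simp)
  fix x :: real
  show "indicator {1..} x * (assoc_tilde M (s * x) / x\<^sup>2) \<le> indicator {1..} x * (assoc_tilde M (t * x) / x\<^sup>2)"
  proof (cases "x \<ge> 1")
    case True
    have "assoc_tilde M (s * x) \<le> assoc_tilde M (t * x)"
      using True assms(3,4) by (intro W_mono[OF assms(1)]) (auto simp: mult_right_mono)
    then show ?thesis using True by (simp add: divide_right_mono)
  qed simp
qed

lemma kappa_nonneg: assumes "wseq_rep M \<mu>" "summable (\<lambda>k. 1 / \<mu> k)" "t > 0"
  shows "0 \<le> kappa (assoc_tilde M) t"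
  using kappa_ge[OF assms] W_nonneg[OF assms(1), of t] assms(3) by simp



lemma kappa_convex: assumes "wseq_rep M \<mu>" "summable (\<lambda>k. 1 / \<mu> k)"
  shows "convex_on UNIV (\<lambda>x. kappa (assoc_tilde M) (exp x))"
proof (rule convex_onI)
  fix u x y :: real assume u: "0 < u" "u < 1"
  define z where "z = (1 - u) *\<^sub>R x + u *\<^sub>R y"
  have "kappa (assoc_tilde M) (exp z)
     \<le> integral\<^sup>L lborel (\<lambda>s. (1 - u) * (indicator {1..} s * (assoc_tilde M (exp x * s) / s\<^sup>2))
                              + u * (indicator {1..} s * (assoc_tilde M (exp y * s) / s\<^sup>2)))"
    unfolding kappa_alt
  proof (rule integral_mono)
    show "integrable lborel (\<lambda>s. indicator {1..} s * (assoc_tilde M (exp z * s) / s\<^sup>2))"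
      by (rule kappa_integrable[OF assms]) simp
    show "integrable lborel (\<lambda>s. (1 - u) * (indicator {1..} s * (assoc_tilde M (exp x * s) / s\<^sup>2))
                              + u * (indicator {1..} s * (assoc_tilde M (exp y * s) / s\<^sup>2)))"
      by (intro Bochner_Integration.integrable_add integrable_mult_right kappa_integrable[OF assms]) simp_all
    fix s :: real
    show "indicator {1..} s * (assoc_tilde M (exp z * s) / s\<^sup>2)
      \<le> (1 - u) * (indicator {1..} s * (assoc_tilde M (exp x * s) / s\<^sup>2))
           + u * (indicator {1..} s * (assoc_tilde M (exp y * s) / s\<^sup>2))"
    proof (cases "s \<ge> 1")
      case True
      then have s: "s > 0" by simp
      have "(1 - u) *\<^sub>R (x + ln s) + u *\<^sub>R (y + ln s) = z + ln s" by (simp add: z_def algebra_simps)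
      then have e: "exp ((1 - u) *\<^sub>R (x + ln s) + u *\<^sub>R (y + ln s)) = exp z * s"
        using s by (simp add: exp_add)
      have ex: "exp (x + ln s) = exp x * s" "exp (y + ln s) = exp y * s" using s by (simp_all add: exp_add)
      have "assoc_tilde M (exp ((1 - u) *\<^sub>R (x + ln s) + u *\<^sub>R (y + ln s)))
          \<le> (1 - u) * assoc_tilde M (exp (x + ln s)) + u * assoc_tilde M (exp (y + ln s))"
        by (rule convex_onD[OF W_convex[OF assms(1)]]) (use u in auto)
      then have "assoc_tilde M (exp z * s) \<le> (1 - u) * assoc_tilde M (exp x * s) + u * assoc_tilde M (exp y * s)"
        unfolding e ex .
      then have "assoc_tilde M (exp z * s) / s\<^sup>2 \<le> ((1 - u) * assoc_tilde M (exp x * s) + u * assoc_tilde M (exp y * s)) / s\<^sup>2"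
        by (simp add: divide_right_mono)
      then show ?thesis using True by (simp add: add_divide_distrib)
    qed simp
  qed
  also have "\<dots> = (1 - u) * kappa (assoc_tilde M) (exp x) + u * kappa (assoc_tilde M) (exp y)"
  proof -
    have i1: "integrable lborel (\<lambda>s. indicator {1..} s * (assoc_tilde M (exp x * s) / s\<^sup>2))"
      by (rule kappa_integrable[OF assms]) simp
    have i2: "integrable lborel (\<lambda>s. indicator {1..} s * (assoc_tilde M (exp y * s) / s\<^sup>2))"
      by (rule kappa_integrable[OF assms]) simp
    show ?thesis unfolding kappa_alt
      by (subst Bochner_Integration.integral_add)
         (auto intro!: integrable_mult_right i1 i2 simp only: integral_mult_right_zero)
  qed
  finally show "kappa (assoc_tilde M) (exp ((1 - u) *\<^sub>R x + u *\<^sub>R y))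
      \<le> (1 - u) * kappa (assoc_tilde M) (exp x) + u * kappa (assoc_tilde M) (exp y)"
    unfolding z_def .
qed auto

lemma kappa_small: assumes "wseq_rep M \<mu>" "summable (\<lambda>k. 1 / \<mu> k)"
  shows "((\<lambda>t. kappa (assoc_tilde M) t / t) \<longlongrightarrow> 0) at_top"
proof -
  define f1 where "f1 = (\<lambda>v. indicator {1..} v * (assoc_tilde M v / v\<^sup>2))"
  define G where "G = (\<lambda>t. integral\<^sup>L lborel (\<lambda>v. indicator {t..} v * f1 v))"
  have f1i: "integrable lborel f1" unfolding f1_def by (rule f1_integrable[OF assms])
  have f1m[measurable]: "f1 \<in> borel_measurable lborel"
    using f1_meas[OF assms(1), of 1] by (simp add: f1_def)
  have f1n: "0 \<le> f1 v" for v using W_nonneg[OF assms(1), of v] by (auto simp: f1_def indicator_def)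
  have Gi: "integrable lborel (\<lambda>v. indicator {t..} v * f1 v)" for t
    using integrable_mult_indicator[OF _ f1i, of "{t..}"] by simp
  have KG: "kappa (assoc_tilde M) t / t = G t" if "t \<ge> 1" for t
    using kappa_eq[OF assms that] that by (simp add: G_def f1_def)
  have G0: "0 \<le> G t" for t unfolding G_def by (rule integral_nonneg_AE) (simp add: f1n)
  have Gmono: "G t' \<le> G t" if "t \<le> t'" for t t'
    unfolding G_def
  proof (rule integral_mono[OF Gi Gi])
    fix v show "indicator {t'..} v * f1 v \<le> indicator {t..} v * f1 v"
      using that f1n[of v] by (auto simp: indicator_def)
  qed
  have c1: "AE v in lborel. ((\<lambda>t. indicator {t..} v * f1 v) \<longlongrightarrow> 0) at_top"
  proof (rule AE_I2)
    fix v :: real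
    have "eventually (\<lambda>t. indicator {t..} v * f1 v = 0) at_top"
      unfolding eventually_at_top_linorder by (intro exI[of _ "v + 1"]) (auto simp: indicator_def)
    then show "((\<lambda>t. indicator {t..} v * f1 v) \<longlongrightarrow> 0) at_top"
      by (rule tendsto_eventually)
  qed
  have c2: "eventually (\<lambda>t. AE v in lborel. norm (indicator {t..} v * f1 v) \<le> f1 v) at_top"
    using f1n by (auto simp: indicator_def)
  have c3: "(\<lambda>v. indicator {t..} v * f1 v) \<in> borel_measurable lborel" for t
    by measurable
  have c4: "(\<lambda>v. 0::real) \<in> borel_measurable lborel" by simp
  have "((\<lambda>t. integral\<^sup>L lborel (\<lambda>v. indicator {t..} v * f1 v)) \<longlongrightarrow> integral\<^sup>L lborel (\<lambda>v. 0::real)) at_top"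
    using integral_dominated_convergence_at_top[OF c4 c3 f1i c1 c2] by simp
  then have Gt: "(G \<longlongrightarrow> 0) at_top" unfolding G_def by simp
  have ev: "eventually (\<lambda>t. G t = kappa (assoc_tilde M) t / t) at_top"
    unfolding eventually_at_top_linorder by (intro exI[of _ 1]) (simp add: KG)
  show ?thesis by (rule Lim_transform_eventually[OF Gt ev])
qed



lemma nq_rep: assumes "nq_weight_seq M" obtains \<mu> where "wseq_rep M \<mu>" "summable (\<lambda>k. 1 / \<mu> k)"
  using assms unfolding nq_weight_seq_def by blast

lemma nqK_ge: "nq_weight_seq M \<Longrightarrow> t > 0 \<Longrightarrow> assoc_tilde M t \<le> kappa (assoc_tilde M) t"
  by (metis nq_rep kappa_ge)
lemma nqK_nonneg: "nq_weight_seq M \<Longrightarrow> t > 0 \<Longrightarrow> 0 \<le> kappa (assoc_tilde M) t"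
  by (metis nq_rep kappa_nonneg)
lemma nqK_mono: "nq_weight_seq M \<Longrightarrow> 0 < s \<Longrightarrow> s \<le> t \<Longrightarrow> kappa (assoc_tilde M) s \<le> kappa (assoc_tilde M) t"
  by (metis nq_rep kappa_mono)
lemma nqK_convex: "nq_weight_seq M \<Longrightarrow> convex_on UNIV (\<lambda>x. kappa (assoc_tilde M) (exp x))"
  by (metis nq_rep kappa_convex)
lemma nqK_small: "nq_weight_seq M \<Longrightarrow> ((\<lambda>t. kappa (assoc_tilde M) t / t) \<longlongrightarrow> 0) at_top"
  by (metis nq_rep kappa_small)
lemma nqW_ge: "nq_weight_seq M \<Longrightarrow> v > 0 \<Longrightarrow> real k * ln v - ln (M k) \<le> assoc_tilde M v"
  by (metis nq_rep W_ge)
lemma nqM_ge1: "nq_weight_seq M \<Longrightarrow> M k \<ge> 1"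
  by (metis nq_rep wr_M_ge1)

lemma omega_anti: assumes "wseq_rep M \<mu>" "wseq_rep N \<nu>" "\<And>k. M k \<le> N k" "v > 0"
  shows "assoc_fun N v \<le> assoc_fun M v"
proof -
  have "(SUP k. ln (v ^ k * N 0 / N k)) \<le> (SUP k. ln (v ^ k * M 0 / M k))"
  proof (rule cSUP_mono)
    show "bdd_above (range (\<lambda>k. ln (v ^ k * M 0 / M k)))" by (rule omega_bdd[OF assms(1,4)])
    fix k
    have "ln (M k) \<le> ln (N k)" using assms(3)[of k] wr_M_ge1[OF assms(1), of k] by simp
    then have "ln (v ^ k * N 0 / N k) \<le> ln (v ^ k * M 0 / M k)"
      using wr_ln2[OF assms(1,4), of k] wr_ln2[OF assms(2,4), of k] by simp
    then show "\<exists>m\<in>UNIV. ln (v ^ k * N 0 / N k) \<le> ln (v ^ m * M 0 / M m)" by blast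
  qed auto
  then show ?thesis using assms(4) by (simp add: assoc_fun_def)
qed

lemma kappa_anti: assumes "nq_weight_seq M" "nq_weight_seq N" "\<And>k. M k \<le> N k" "t > 0"
  shows "kappa (assoc_tilde N) t \<le> kappa (assoc_tilde M) t"
proof -
  obtain \<mu> where m: "wseq_rep M \<mu>" "summable (\<lambda>k. 1 / \<mu> k)" using nq_rep[OF assms(1)] by blast
  obtain \<nu> where n: "wseq_rep N \<nu>" "summable (\<lambda>k. 1 / \<nu> k)" using nq_rep[OF assms(2)] by blast
  show ?thesis unfolding kappa_alt
  proof (rule integral_mono)
    show "integrable lborel (\<lambda>s. indicator {1..} s * (assoc_tilde N (t * s) / s\<^sup>2))"
      by (rule kappa_integrable[OF n assms(4)])
    show "integrable lborel (\<lambda>s. indicator {1..} s * (assoc_tilde M (t * s) / s\<^sup>2))"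
      by (rule kappa_integrable[OF m assms(4)])
    fix s :: real
    show "indicator {1..} s * (assoc_tilde N (t * s) / s\<^sup>2) \<le> indicator {1..} s * (assoc_tilde M (t * s) / s\<^sup>2)"
    proof (cases "s \<ge> 1")
      case True
      have "assoc_fun N (t * s) \<le> assoc_fun M (t * s)"
        using True assms(4) by (intro omega_anti[OF m(1) n(1) assms(3)]) simp
      then have "assoc_tilde N (t * s) \<le> assoc_tilde M (t * s)" by (simp add: assoc_tilde_def)
      then show ?thesis using True by (simp add: divide_right_mono)
    qed simp
  qed
qed

lemma max_aux: fixes a b d c u :: real assumes "a \<le> (1 - u) * b + u * d" "0 \<le> u" "u \<le> 1"
  shows "max 0 (a - c) \<le> (1 - u) * max 0 (b - c) + u * max 0 (d - c)"
proof -
  have 1: "(1 - u) * (b - c) \<le> (1 - u) * max 0 (b - c)" using assms by (intro mult_left_mono) auto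
  have 2: "u * (d - c) \<le> u * max 0 (d - c)" using assms by (intro mult_left_mono) auto
  have 3: "0 \<le> (1 - u) * max 0 (b - c)" "0 \<le> u * max 0 (d - c)" using assms by auto
  have 4: "(1 - u) * (b - c) + u * (d - c) = (1 - u) * b + u * d - c" by (simp add: algebra_simps)
  show ?thesis using 1 2 3 4 assms(1) by linarith
qed

definition kp :: "(real \<Rightarrow> nat \<Rightarrow> real) \<Rightarrow> real \<Rightarrow> real \<Rightarrow> real" where
  "kp Mf \<alpha> t = (if t \<le> 1 then 0 else
     (SUP \<gamma>\<in>{\<alpha>..}. max 0 (kappa (assoc_tilde (Mf \<gamma>)) t - kappa (assoc_tilde (Mf \<gamma>)) 1)))"

context
  fixes Mf :: "real \<Rightarrow> nat \<Rightarrow> real"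
  assumes A: "nq_weight_matrix Mf"
begin

abbreviation "K\<kappa> \<gamma> \<equiv> kappa (assoc_tilde (Mf \<gamma>))"
abbreviation "h \<gamma> t \<equiv> max 0 (K\<kappa> \<gamma> t - K\<kappa> \<gamma> 1)"

lemma A_nq: "\<gamma> > 0 \<Longrightarrow> nq_weight_seq (Mf \<gamma>)"
  using A unfolding nq_weight_matrix_def by auto

lemma A_le: "0 < \<alpha> \<Longrightarrow> \<alpha> \<le> \<beta> \<Longrightarrow> Mf \<alpha> k \<le> Mf \<beta> k"
  using A unfolding nq_weight_matrix_def weight_matrix_def by auto

lemma K_anti: "0 < \<alpha> \<Longrightarrow> \<alpha> \<le> \<beta> \<Longrightarrow> t > 0 \<Longrightarrow> K\<kappa> \<beta> t \<le> K\<kappa> \<alpha> t"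
  by (rule kappa_anti[OF A_nq A_nq]) (auto intro: A_le)

lemma h_le: assumes "0 < \<alpha>" "\<alpha> \<le> \<gamma>" "t > 0" shows "h \<gamma> t \<le> K\<kappa> \<alpha> t"
proof -
  have "\<gamma> > 0" using assms by simp
  have "0 \<le> K\<kappa> \<gamma> 1" by (rule nqK_nonneg[OF A_nq[OF \<open>\<gamma> > 0\<close>]]) simp
  moreover have "K\<kappa> \<gamma> t \<le> K\<kappa> \<alpha> t" by (rule K_anti) (use assms in auto)
  moreover have "0 \<le> K\<kappa> \<alpha> t" by (rule nqK_nonneg[OF A_nq]) (use assms in auto)
  ultimately show ?thesis by simp
qed

lemma h_bdd: assumes "0 < \<alpha>" "t > 0" shows "bdd_above ((\<lambda>\<gamma>. h \<gamma> t) ` {\<alpha>..})"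
  by (rule bdd_aboveI2[where M = "K\<kappa> \<alpha> t"]) (use h_le assms in auto)

lemma h_zero: assumes "0 < \<gamma>" "0 < t" "t \<le> 1" shows "h \<gamma> t = 0"
  using nqK_mono[OF A_nq[OF assms(1)] assms(2,3)] by simp

lemma kp_SUP: assumes "0 < \<alpha>" "t > 0" shows "kp Mf \<alpha> t = (SUP \<gamma>\<in>{\<alpha>..}. h \<gamma> t)"
proof (cases "t \<le> 1")
  case True
  have "(SUP \<gamma>\<in>{\<alpha>..}. h \<gamma> t) = (SUP \<gamma>\<in>{\<alpha>..}. (0::real))"
    by (rule SUP_cong) (use h_zero assms True in auto)
  also have "\<dots> = 0" by simp
  finally show ?thesis using True by (simp add: kp_def)
qed (simp add: kp_def)

lemma kp_upper: assumes "0 < \<alpha>" "\<alpha> \<le> \<gamma>" "t > 0" shows "h \<gamma> t \<le> kp Mf \<alpha> t"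
  unfolding kp_SUP[OF assms(1,3)] by (rule cSUP_upper) (use assms h_bdd in auto)

lemma kp_le: assumes "0 < \<alpha>" "t > 0" shows "kp Mf \<alpha> t \<le> K\<kappa> \<alpha> t"
  unfolding kp_SUP[OF assms] by (rule cSUP_least) (use h_le assms in auto)

lemma kp_nonneg: assumes "0 < \<alpha>" "t > 0" shows "0 \<le> kp Mf \<alpha> t"
  using kp_upper[OF assms(1) order_refl assms(2)] by simp

lemma kp_nonneg': assumes "0 < \<alpha>" shows "0 \<le> kp Mf \<alpha> t"
  using kp_nonneg[OF assms] by (cases "t > 0") (auto simp: kp_def)

lemma kp_ge: assumes "0 < \<alpha>" "t > 0" shows "K\<kappa> \<alpha> t - K\<kappa> \<alpha> 1 \<le> kp Mf \<alpha> t"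
  using kp_upper[OF assms(1) order_refl assms(2)] by simp

lemma kp_small: assumes "t \<le> 1" shows "kp Mf \<alpha> t = 0"
  using assms by (simp add: kp_def)

lemma kp_anti: assumes "0 < \<alpha>" "\<alpha> \<le> \<beta>" shows "kp Mf \<beta> t \<le> kp Mf \<alpha> t"
proof (cases "t \<le> 1")
  case False
  then have t: "t > 0" by simp
  show ?thesis unfolding kp_SUP[OF assms(1) t] kp_SUP[OF order.strict_trans2[OF assms] t]
    by (rule cSUP_subset_mono) (use assms h_bdd[OF assms(1) t] in auto)
qed (simp add: kp_def)

lemma kp_convex: assumes "0 < \<alpha>" shows "convex_on UNIV (\<lambda>x. kp Mf \<alpha> (exp x))"
proof (rule convex_onI)
  fix u x y :: real assume u: "0 < u" "u < 1"
  show "kp Mf \<alpha> (exp ((1 - u) *\<^sub>R x + u *\<^sub>R y)) \<le> (1 - u) * kp Mf \<alpha> (exp x) + u * kp Mf \<alpha> (exp y)"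
    unfolding kp_SUP[OF assms exp_gt_zero]
  proof (rule cSUP_least)
    fix \<gamma> assume g: "\<gamma> \<in> {\<alpha>..}"
    then have g0: "\<gamma> > 0" using assms by simp
    have "K\<kappa> \<gamma> (exp ((1 - u) *\<^sub>R x + u *\<^sub>R y)) \<le> (1 - u) * K\<kappa> \<gamma> (exp x) + u * K\<kappa> \<gamma> (exp y)"
      by (rule convex_onD[OF nqK_convex[OF A_nq[OF g0]]]) (use u in auto)
    then have "h \<gamma> (exp ((1 - u) *\<^sub>R x + u *\<^sub>R y)) \<le> (1 - u) * h \<gamma> (exp x) + u * h \<gamma> (exp y)"
      by (rule max_aux) (use u in auto)
    also have "\<dots> \<le> (1 - u) * (SUP \<gamma>\<in>{\<alpha>..}. h \<gamma> (exp x)) + u * (SUP \<gamma>\<in>{\<alpha>..}. h \<gamma> (exp y))"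
      using u g by (intro add_mono mult_left_mono cSUP_upper h_bdd[OF assms exp_gt_zero]) auto
    finally show "h \<gamma> (exp ((1 - u) *\<^sub>R x + u *\<^sub>R y)) \<le> (1 - u) * (SUP \<gamma>\<in>{\<alpha>..}. h \<gamma> (exp x)) + u * (SUP \<gamma>\<in>{\<alpha>..}. h \<gamma> (exp y))" .
  qed auto
qed auto


lemma kp_mono: assumes "0 < \<alpha>" shows "mono_on {0..} (kp Mf \<alpha>)"
proof (rule mono_onI)
  fix s t :: real assume st: "s \<in> {0..}" "t \<in> {0..}" "s \<le> t"
  show "kp Mf \<alpha> s \<le> kp Mf \<alpha> t"
  proof (cases "s \<le> 1")
    case True
    then show ?thesis using kp_nonneg'[OF assms, of t] by (simp add: kp_small)
  next
    case False
    then have s: "s > 0" "t > 0" using st by auto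
    show ?thesis unfolding kp_SUP[OF assms s(1)] kp_SUP[OF assms s(2)]
    proof (rule cSUP_mono)
      show "bdd_above ((\<lambda>\<gamma>. h \<gamma> t) ` {\<alpha>..})" by (rule h_bdd[OF assms s(2)])
      fix \<gamma> assume g: "\<gamma> \<in> {\<alpha>..}"
      then have "\<gamma> > 0" using assms by simp
      have "K\<kappa> \<gamma> s \<le> K\<kappa> \<gamma> t" by (rule nqK_mono[OF A_nq[OF \<open>\<gamma> > 0\<close>] s(1) st(3)])
      then show "\<exists>m\<in>{\<alpha>..}. h \<gamma> s \<le> h m t" using g by (intro bexI[of _ \<gamma>]) auto
    qed auto
  qed
qed

lemma kp_cont: assumes "0 < \<alpha>" shows "continuous_on {0..} (kp Mf \<alpha>)"
proof -
  have c: "continuous_on UNIV (\<lambda>x. kp Mf \<alpha> (exp x))"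
    by (rule convex_on_continuous) (auto simp: kp_convex[OF assms])
  have "continuous_on {0<..} ((\<lambda>x. kp Mf \<alpha> (exp x)) \<circ> ln)"
    by (rule continuous_on_compose) (auto intro!: continuous_on_ln continuous_on_id continuous_on_subset[OF c])
  then have c1: "continuous_on {0<..} (kp Mf \<alpha>)"
    by (rule continuous_on_cong[THEN iffD1, rotated 2]) auto
  have c2: "continuous_on {..<1} (kp Mf \<alpha>)"
    by (rule continuous_on_cong[THEN iffD1, OF refl _ continuous_on_const[of _ 0]]) (auto simp: kp_small)
  have "continuous_on ({0<..} \<union> {..<1}) (kp Mf \<alpha>)"
    by (rule continuous_on_open_Un[OF _ _ c1 c2]) auto
  then show ?thesis by (rule continuous_on_subset) auto
qed

lemma kp_ge_log: assumes "0 < \<alpha>" "t > 0"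
  shows "real k * ln t - ln (Mf \<alpha> k) - K\<kappa> \<alpha> 1 \<le> kp Mf \<alpha> t"
proof -
  have "real k * ln t - ln (Mf \<alpha> k) \<le> assoc_tilde (Mf \<alpha>) t" by (rule nqW_ge[OF A_nq[OF assms(1)] assms(2)])
  also have "\<dots> \<le> K\<kappa> \<alpha> t" by (rule nqK_ge[OF A_nq[OF assms(1)] assms(2)])
  finally show ?thesis using kp_ge[OF assms] by simp
qed

lemma kp_o: assumes "0 < \<alpha>" shows "(\<lambda>t. ln t) \<in> o[at_top](kp Mf \<alpha>)"
proof (rule landau_o.smallI)
  fix c :: real assume c: "c > 0"
  define k where "k = nat \<lceil>2 / c\<rceil>"
  have ck: "c * real k \<ge> 2"
  proof -
    have "real k \<ge> 2 / c" unfolding k_def by linarith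
    then show ?thesis using c by (simp add: field_simps)
  qed
  define E where "E = ln (Mf \<alpha> k) + K\<kappa> \<alpha> 1"
  show "eventually (\<lambda>t. norm (ln t) \<le> c * norm (kp Mf \<alpha> t)) at_top"
    unfolding eventually_at_top_linorder
  proof (intro exI[of _ "max 1 (exp (c * E))"] allI impI)
    fix t :: real assume t: "t \<ge> max 1 (exp (c * E))"
    then have t0: "t > 0" "t \<ge> 1" by auto
    have lt: "ln t \<ge> c * E" using t t0 by (metis exp_le_cancel_iff exp_ln max.boundedE t0(1))
    have lt0: "ln t \<ge> 0" using t0 by simp
    have kb: "real k * ln t - E \<le> kp Mf \<alpha> t" using kp_ge_log[OF assms t0(1), of k] by (simp add: E_def)
    have "c * (real k * ln t - E) \<le> c * kp Mf \<alpha> t" using kb c by (intro mult_left_mono) auto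
    moreover have "c * real k * ln t \<ge> 2 * ln t" using ck lt0 by (intro mult_right_mono) auto
    ultimately have "ln t \<le> c * kp Mf \<alpha> t" using lt by (simp add: algebra_simps)
    then show "norm (ln t) \<le> c * norm (kp Mf \<alpha> t)" using lt0 kp_nonneg[OF assms t0(1)] by simp
  qed
qed

lemma kp_O1: assumes "0 < \<alpha>" shows "kp Mf \<alpha> \<in> O[at_top](K\<kappa> \<alpha>)"
proof (rule bigoI[where c = 1])
  show "eventually (\<lambda>t. norm (kp Mf \<alpha> t) \<le> 1 * norm (K\<kappa> \<alpha> t)) at_top"
    unfolding eventually_at_top_linorder
  proof (intro exI[of _ 1] allI impI)
    fix t :: real assume "t \<ge> 1"
    then have t: "t > 0" by simp
    show "norm (kp Mf \<alpha> t) \<le> 1 * norm (K\<kappa> \<alpha> t)"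
      using kp_nonneg[OF assms t] kp_le[OF assms t] by simp
  qed
qed

lemma kp_O2: assumes "0 < \<alpha>" shows "K\<kappa> \<alpha> \<in> O[at_top](kp Mf \<alpha>)"
proof (rule bigoI[where c = 2])
  define D where "D = K\<kappa> \<alpha> 1"
  show "eventually (\<lambda>t. norm (K\<kappa> \<alpha> t) \<le> 2 * norm (kp Mf \<alpha> t)) at_top"
    unfolding eventually_at_top_linorder
  proof (intro exI[of _ "max 1 (exp (ln (Mf \<alpha> 1) + 2 * D))"] allI impI)
    fix t :: real assume t: "t \<ge> max 1 (exp (ln (Mf \<alpha> 1) + 2 * D))"
    then have t0: "t > 0" by auto
    have lt: "ln t \<ge> ln (Mf \<alpha> 1) + 2 * D" using t t0 by (metis exp_le_cancel_iff exp_ln max.boundedE)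
    have "real 1 * ln t - ln (Mf \<alpha> 1) - D \<le> kp Mf \<alpha> t" using kp_ge_log[OF assms t0, of 1] by (simp add: D_def)
    then have "D \<le> kp Mf \<alpha> t" using lt by simp
    moreover have "K\<kappa> \<alpha> t - D \<le> kp Mf \<alpha> t" using kp_ge[OF assms t0] by (simp add: D_def)
    moreover have "0 \<le> K\<kappa> \<alpha> t" by (rule nqK_nonneg[OF A_nq[OF assms] t0])
    ultimately show "norm (K\<kappa> \<alpha> t) \<le> 2 * norm (kp Mf \<alpha> t)" by simp
  qed
qed

lemma kp_normalized: assumes "0 < \<alpha>" shows "normalized_equiv (K\<kappa> \<alpha>) (kp Mf \<alpha>)"
  unfolding normalized_equiv_def pre_weight_fun_def
  using kp_cont[OF assms] kp_mono[OF assms] kp_o[OF assms] kp_convex[OF assms] kp_O1[OF assms] kp_O2[OF assms]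
  by (auto simp: kp_small)

end


context
  fixes Mf :: "real \<Rightarrow> nat \<Rightarrow> real"
  assumes A: "nq_weight_matrix Mf"
begin

abbreviation "K\<kappa>' \<gamma> \<equiv> kappa (assoc_tilde (Mf \<gamma>))"
abbreviation "ps \<alpha> x \<equiv> phi_star (kp Mf \<alpha>) x"

lemma ps_term_le: assumes "0 < \<alpha>" shows "real j * y - kp Mf \<alpha> (exp y) \<le> ln (Mf \<alpha> j) + K\<kappa>' \<alpha> 1"
  using kp_ge_log[OF A assms exp_gt_zero, of j y] by simp

lemma ps_bdd: assumes "0 < \<alpha>" shows "bdd_above ((\<lambda>y. real j * y - phi_fun (kp Mf \<alpha>) y) ` {0..})"
  unfolding phi_fun_def by (rule bdd_aboveI2[where M = "ln (Mf \<alpha> j) + K\<kappa>' \<alpha> 1"]) (rule ps_term_le[OF assms])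

lemma ps_le: assumes "0 < \<alpha>" shows "ps \<alpha> (real j) \<le> ln (Mf \<alpha> j) + K\<kappa>' \<alpha> 1"
  unfolding phi_star_def phi_fun_def by (rule cSUP_least) (auto intro: ps_term_le[OF assms])

lemma ps_ge: assumes "0 < \<alpha>" "0 \<le> y" shows "real j * y - kp Mf \<alpha> (exp y) \<le> ps \<alpha> (real j)"
  using cSUP_upper[OF _ ps_bdd[OF assms(1)], of y j] assms(2) unfolding phi_star_def phi_fun_def by simp

lemma ps0: assumes "0 < \<alpha>" shows "ps \<alpha> 0 = 0"
proof (rule antisym)
  show "ps \<alpha> 0 \<le> 0" unfolding phi_star_def phi_fun_def
    by (rule cSUP_least) (auto intro: kp_nonneg'[OF A assms])
  show "0 \<le> ps \<alpha> 0" using ps_ge[OF assms order_refl, of 0] by (simp add: kp_small[OF A])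
qed

lemma ps1: assumes "0 < \<alpha>" shows "0 \<le> ps \<alpha> 1"
  using ps_ge[OF assms order_refl, of 1] by (simp add: kp_small[OF A])

lemma ps_convex: assumes "0 < \<alpha>"
  shows "2 * ps \<alpha> (real (Suc m)) \<le> ps \<alpha> (real m) + ps \<alpha> (real (Suc (Suc m)))"
proof -
  have "ps \<alpha> (real (Suc m)) \<le> (ps \<alpha> (real m) + ps \<alpha> (real (Suc (Suc m)))) / 2"
    unfolding phi_star_def[of _ "real (Suc m)"] phi_fun_def
  proof (rule cSUP_least)
    fix y :: real assume y: "y \<in> {0..}"
    have "real m * y - kp Mf \<alpha> (exp y) \<le> ps \<alpha> (real m)" using ps_ge[OF assms, of y m] y by simp
    moreover have "real (Suc (Suc m)) * y - kp Mf \<alpha> (exp y) \<le> ps \<alpha> (real (Suc (Suc m)))"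
      using ps_ge[OF assms, of y "Suc (Suc m)"] y by simp
    ultimately show "real (Suc m) * y - kp Mf \<alpha> (exp y) \<le> (ps \<alpha> (real m) + ps \<alpha> (real (Suc (Suc m)))) / 2"
      by (simp add: algebra_simps)
  qed auto
  then show ?thesis by simp
qed

lemma ps_anti: assumes "0 < \<alpha>" "\<alpha> \<le> \<beta>" shows "ps \<alpha> (real j) \<le> ps \<beta> (real j)"
  unfolding phi_star_def[of "kp Mf \<alpha>"] phi_fun_def
proof (rule cSUP_least)
  fix y :: real assume y: "y \<in> {0..}"
  have "kp Mf \<beta> (exp y) \<le> kp Mf \<alpha> (exp y)" by (rule kp_anti[OF A assms])
  moreover have "real j * y - kp Mf \<beta> (exp y) \<le> ps \<beta> (real j)"
    by (rule ps_ge) (use y assms in auto)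
  ultimately show "real j * y - kp Mf \<alpha> (exp y) \<le> ps \<beta> (real j)" by simp
qed auto

lemma K0: assumes "0 < \<alpha>" shows "Kseq (kp Mf \<alpha>) 0 = 1"
  using ps0[OF assms] by (simp add: Kseq_def)

lemma K1: assumes "0 < \<alpha>" shows "1 \<le> Kseq (kp Mf \<alpha>) 1"
  using ps1[OF assms] by (simp add: Kseq_def)

lemma K_pos: "0 < Kseq \<kappa> j" by (simp add: Kseq_def)

lemma K_bound: assumes "0 < \<alpha>" shows "Kseq (kp Mf \<alpha>) j / Mf \<alpha> j \<le> exp (K\<kappa>' \<alpha> 1)"
proof -
  have M: "Mf \<alpha> j \<ge> 1" by (rule nqM_ge1[OF A_nq[OF A assms]])
  have "Kseq (kp Mf \<alpha>) j \<le> exp (ln (Mf \<alpha> j) + K\<kappa>' \<alpha> 1)"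
    unfolding Kseq_def using ps_le[OF assms] by simp
  also have "\<dots> = Mf \<alpha> j * exp (K\<kappa>' \<alpha> 1)" using M by (simp add: exp_add)
  finally show ?thesis using M by (simp add: divide_simps mult.commute)
qed

lemma Kseq_anti: assumes "0 < \<alpha>" "\<alpha> \<le> \<beta>" shows "Kseq (kp Mf \<alpha>) j \<le> Kseq (kp Mf \<beta>) j"
  unfolding Kseq_def using ps_anti[OF assms] by simp


lemma K_lower: assumes "0 < \<alpha>" "u \<ge> 1" shows "exp (real j * ln u - kp Mf \<alpha> u) \<le> Kseq (kp Mf \<alpha>) j"
proof -
  have "real j * ln u - kp Mf \<alpha> (exp (ln u)) \<le> ps \<alpha> (real j)" by (rule ps_ge) (use assms in auto)
  then show ?thesis using assms by (simp add: Kseq_def)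
qed

lemma K_root: assumes "0 < \<alpha>"
  shows "filterlim (\<lambda>j. root j (Kseq (kp Mf \<alpha>) j / fact j)) at_top sequentially"
  unfolding filterlim_at_top_ge[where c = 1]
proof (intro allI impI)
  fix Z :: real assume Z: "Z \<ge> 1"
  define B where "B = 3 * Z"
  have B: "B \<ge> 3" "B / exp 1 \<ge> Z" using Z exp_le by (auto simp: B_def field_simps)
  have "((\<lambda>t. K\<kappa>' \<alpha> t / t) \<longlongrightarrow> 0) at_top" by (rule nqK_small[OF A_nq[OF A assms]])
  then have "eventually (\<lambda>t. K\<kappa>' \<alpha> t / t < 1 / B) at_top"
    by (rule order_tendstoD(2)) (use B in simp)
  then obtain U where U: "\<And>t. t \<ge> U \<Longrightarrow> K\<kappa>' \<alpha> t / t < 1 / B"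
    by (auto simp: eventually_at_top_linorder)
  show "eventually (\<lambda>j. Z \<le> root j (Kseq (kp Mf \<alpha>) j / fact j)) sequentially"
  proof (rule eventually_sequentiallyI[of "max 1 (nat \<lceil>U\<rceil>)"])
    fix j :: nat assume j: "max 1 (nat \<lceil>U\<rceil>) \<le> j"
    then have j1: "j \<ge> 1" "real j \<ge> U" by linarith+
    define u where "u = B * real j"
    have uj: "real j \<le> u" unfolding u_def using mult_right_mono[of 1 B "real j"] B by simp
    have u1: "u \<ge> 1" "u \<ge> U" "u > 0" using uj j1 by linarith+
    have "K\<kappa>' \<alpha> u / u < 1 / B" by (rule U[OF u1(2)])
    then have "K\<kappa>' \<alpha> u < u / B" using u1(3) B by (simp add: field_simps)
    then have kpu: "kp Mf \<alpha> u < real j" using kp_le[OF A assms u1(3)] B by (simp add: u_def)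
    have "exp (real j * (ln u - 1)) \<le> exp (real j * ln u - kp Mf \<alpha> u)"
      using kpu by (simp add: algebra_simps)
    also have "\<dots> \<le> Kseq (kp Mf \<alpha>) j" by (rule K_lower[OF assms u1(1)])
    finally have k1: "exp (real j * (ln u - 1)) \<le> Kseq (kp Mf \<alpha>) j" .
    have "exp (real j * (ln u - 1)) = (exp (ln u - 1)) ^ j" by (rule exp_of_nat_mult)
    also have "exp (ln u - 1) = u / exp 1" using u1 by (simp add: exp_diff)
    also have "(u / exp 1) ^ j = (B / exp 1) ^ j * real j ^ j"
    proof -
      have "u / exp 1 = (B / exp 1) * real j" by (simp add: u_def)
      then show ?thesis by (simp only: power_mult_distrib)
    qed
    finally have k2: "(B / exp 1) ^ j * real j ^ j \<le> Kseq (kp Mf \<alpha>) j" using k1 by simp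
    have fj: "fact j \<le> real j ^ j" using fact_le_power[of j] by simp
    have fpos: "(0::real) < fact j" by simp
    have "Z ^ j \<le> (B / exp 1) ^ j" using B Z by (intro power_mono) auto
    also have "(B / exp 1) ^ j = (B / exp 1) ^ j * real j ^ j / real j ^ j" using j1 by simp
    also have "\<dots> \<le> Kseq (kp Mf \<alpha>) j / real j ^ j" using k2 j1 by (intro divide_right_mono) auto
    also have "\<dots> \<le> Kseq (kp Mf \<alpha>) j / fact j"
      using fj fpos K_pos[of "kp Mf \<alpha>" j] j1 by (intro divide_left_mono) auto
    finally have "Z ^ j \<le> Kseq (kp Mf \<alpha>) j / fact j" .
    then have "root j (Z ^ j) \<le> root j (Kseq (kp Mf \<alpha>) j / fact j)" using j1 by simp
    then show "Z \<le> root j (Kseq (kp Mf \<alpha>) j / fact j)" using j1 Z by (simp add: real_root_power_cancel)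
  qed
qed


lemma K_wseq: assumes "0 < \<alpha>" shows "weight_seq (Kseq (kp Mf \<alpha>))"
proof -
  define K where "K = Kseq (kp Mf \<alpha>)"
  define m where "m = (\<lambda>k. if k = 0 then 1 else K k / K (k - 1))"
  have Kp: "K k > 0" for k unfolding K_def by (rule K_pos)
  have K0': "K 0 = 1" unfolding K_def by (rule K0[OF assms])
  have m0: "m 0 = 1" by (simp add: m_def)
  have mS: "m (Suc k) = K (Suc k) / K k" for k by (simp add: m_def)
  have step: "m k \<le> m (Suc k)" for k
  proof (cases k)
    case 0
    then show ?thesis using K1[OF assms] K0' by (simp add: m_def K_def)
  next
    case (Suc n)
    have c: "2 * ps \<alpha> (real (Suc n)) \<le> ps \<alpha> (real n) + ps \<alpha> (real (Suc (Suc n)))"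
      by (rule ps_convex[OF assms])
    have "K (Suc n) * K (Suc n) \<le> K (Suc (Suc n)) * K n"
    proof -
      have "K (Suc n) * K (Suc n) = exp (2 * ps \<alpha> (real (Suc n)))"
        by (simp add: K_def Kseq_def mult_exp_exp)
      also have "\<dots> \<le> exp (ps \<alpha> (real n) + ps \<alpha> (real (Suc (Suc n))))" using c by simp
      also have "\<dots> = K (Suc (Suc n)) * K n" by (simp add: K_def Kseq_def exp_add)
      finally show ?thesis .
    qed
    then show ?thesis using Suc Kp[of n] Kp[of "Suc n"] by (simp add: mS divide_simps)
  qed
  have mono_m: "mono m" unfolding mono_iff_le_Suc using step by blast
  have m1: "m k \<ge> 1" for k using monoD[OF mono_m, of 0 k] m0 by simp
  have prod: "K k = (\<Prod>i\<le>k. m i)" for k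
  proof (induction k)
    case 0 then show ?case using K0' m0 by simp
  next
    case (Suc k)
    have "(\<Prod>i\<le>Suc k. m i) = (\<Prod>i\<le>k. m i) * m (Suc k)" by (simp add: atMost_Suc mult.commute)
    also have "\<dots> = K k * (K (Suc k) / K k)" by (simp only: Suc.IH[symmetric] mS)
    also have "\<dots> = K (Suc k)" using Kp[of k] by simp
    finally show ?case by simp
  qed
  have Kle: "K k \<le> m k ^ k" for k
  proof (induction k)
    case 0 then show ?case using K0' by simp
  next
    case (Suc k)
    have "K (Suc k) = K k * m (Suc k)" using Kp[of k] by (simp add: mS)
    also have "\<dots> \<le> m k ^ k * m (Suc k)" using Suc m1[of "Suc k"] by (intro mult_right_mono) auto
    also have "\<dots> \<le> m (Suc k) ^ k * m (Suc k)"
      using step[of k] m1[of k] m1[of "Suc k"] by (intro mult_right_mono power_mono) auto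
    also have "\<dots> = m (Suc k) ^ Suc k" by (simp add: mult.commute)
    finally show ?case .
  qed
  have lim: "filterlim m at_top sequentially"
  proof (rule filterlim_at_top_mono[OF K_root[OF assms]])
    show "eventually (\<lambda>k. root k (Kseq (kp Mf \<alpha>) k / fact k) \<le> m k) sequentially"
    proof (rule eventually_sequentiallyI[of 1])
      fix k :: nat assume k: "1 \<le> k"
      have "K k / fact k \<le> K k" using Kp[of k] by (simp add: divide_simps)
      also have "\<dots> \<le> m k ^ k" by (rule Kle)
      finally have "root k (K k / fact k) \<le> root k (m k ^ k)" using k by simp
      also have "\<dots> = m k" using k m1[of k] by (simp add: real_root_power_cancel)
      finally show "root k (Kseq (kp Mf \<alpha>) k / fact k) \<le> m k" by (simp add: K_def)
    qed
  qed
  have "wseq_rep K m" unfolding wseq_rep_def using m0 mono_m lim prod by blast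
  then show ?thesis unfolding weight_seq_def K_def by blast
qed

end

theorem lemma3p2:
  fixes Mf :: "real \<Rightarrow> nat \<Rightarrow> real"
  assumes "nq_weight_matrix Mf"
  shows "\<exists>\<kappa>' :: real \<Rightarrow> real \<Rightarrow> real.
     (\<forall>\<alpha>>0. normalized_equiv (kappa (assoc_tilde (Mf \<alpha>))) (\<kappa>' \<alpha>)
              \<and> Kseq (\<kappa>' \<alpha>) 0 = 1 \<and> 1 \<le> Kseq (\<kappa>' \<alpha>) 1)
   \<and> weight_matrix (\<lambda>\<alpha>. Kseq (\<kappa>' \<alpha>))
   \<and> (\<forall>\<alpha>>0. filterlim (\<lambda>j. root j (Kseq (\<kappa>' \<alpha>) j / fact j)) at_top sequentially
              \<and> (\<exists>C. \<forall>j. Kseq (\<kappa>' \<alpha>) j / Mf \<alpha> j \<le> C))"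
proof (intro exI[of _ "kp Mf"] conjI allI impI)
  fix \<alpha> :: real assume a: "\<alpha> > 0"
  show "normalized_equiv (kappa (assoc_tilde (Mf \<alpha>))) (kp Mf \<alpha>)" by (rule kp_normalized[OF assms a])
  show "Kseq (kp Mf \<alpha>) 0 = 1" by (rule K0[OF assms a])
  show "1 \<le> Kseq (kp Mf \<alpha>) 1" by (rule K1[OF assms a])
next
  show "weight_matrix (\<lambda>\<alpha>. Kseq (kp Mf \<alpha>))"
    unfolding weight_matrix_def using K_wseq[OF assms] Kseq_anti[OF assms] by blast
next
  fix \<alpha> :: real assume a: "\<alpha> > 0"
  show "filterlim (\<lambda>j. root j (Kseq (kp Mf \<alpha>) j / fact j)) at_top sequentially"
    by (rule K_root[OF assms a])
  show "\<exists>C. \<forall>j. Kseq (kp Mf \<alpha>) j / Mf \<alpha> j \<le> C"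
    using K_bound[OF assms a] by blast
qed

end
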